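(* Let $\phi$ be an instance of MonLinNAE3SAT, and let $\mathcal{G}$ be the lifetime-1 temporal graph constructed from $\phi$, with sources $s$ and $s'$. If $\phi$ is satisfiable in the not-all-equal sense, then the minimum value of a solution of \textsc{ReachFast} on $\mathcal{G}$ with sources $\{s,s'\}$ equals $6$.
   Context: MonLinNAE3SAT instance: a CNF formula $\phi$ on variables $x_1,\dots,x_n$ with clauses $c_1,\dots,c_m$. Every clause has exactly three distinct literals, every variable appears exactly four times, there are no negations, and any two clauses share at most one variable. The formula is NAE-satisfiable if some truth assignment makes, in every clause, at least one literal true and at least one literal false. Construction of $\mathcal{G}$. All edges have the single label $1$ (lifetime $1$). The vertices and edges are as follows. - Sources $s,s'$. - For each clause $c_j$: vertices $a_j,a'_j,z_j,z'_j$ and edges $sa_j$, $s'a'_j$, $a_jz_j$, $a'_jz'_j$. - For each variable $x_i$: vertices $b_i,b'_i,w_i$ and edges $b_iw_i$, $w_ib'_i$. - If $x_i$ appears in $c_j$: edges $a_jb_i$ and $a'_jb'_i$. - If $x_i$ and $x_k$ appear in a common clause: edges $b_ib_k$, $b'_ib'_k$, $w_iw_k$. - A ladder on vertices $p_1,\dots,p_5,q_1,\dots,q_5$ with edges $sp_1$, $sq_1$, $s'p_5$, $s'q_5$, $p_ip_{i+1}$ and $q_iq_{i+1}$ for $i\in[4]$, and $p_iq_i$ for $i\in[5]$. Temporal graph notions. A temporal graph has edge sets $E_1,\dots,E_{t_{\max}}$, and an edge has label $i$ if it lies in $E_i$. A temporal path uses edges with strictly increasing labels; its arrival time is its last label.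 $\mathrm{reachtime}(v,\cdot)$ is the least $t$ such that $v$ reaches every vertex by time $t$. Delaying a label $i$ by a positive integer $\delta$ replaces it by $i+\delta$. A solution for sources $S$ is a temporal graph obtained by delaying labels in which every source reaches every vertex; its value is $\max_{v\in S}\mathrm{reachtime}(v,\cdot)$. *)

theory Defs
  imports Complex_Main
begin

text \<open>Variables are x_0,...,x_{n-1}, clauses c_0,...,c_{m-1}; a clause is the set of
  (indices of) its three distinct variables (no negations: monotone).\<close>

definition MonLinNAE3SAT :: "nat \<Rightarrow> nat \<Rightarrow> (nat \<Rightarrow> nat set) \<Rightarrow> bool" where
  "MonLinNAE3SAT n m c \<longleftrightarrow>
     (\<forall>j<m. c j \<subseteq> {..<n} \<and> card (c j) = 3) \<and>
     (\<forall>i<n. card {j. j < m \<and> i \<in> c j} = 4) \<and>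
     (\<forall>j<m. \<forall>k<m. j \<noteq> k \<longrightarrow> card (c j \<inter> c k) \<le> 1)"

definition NAE_satisfiable :: "nat \<Rightarrow> (nat \<Rightarrow> nat set) \<Rightarrow> bool" where
  "NAE_satisfiable m c \<longleftrightarrow>
     (\<exists>\<tau> :: nat \<Rightarrow> bool. \<forall>j<m. (\<exists>i\<in>c j. \<tau> i) \<and> (\<exists>i\<in>c j. \<not> \<tau> i))"

definition temporal_path_arrival ::
  "'v set set \<Rightarrow> ('v set \<Rightarrow> nat) \<Rightarrow> 'v \<Rightarrow> 'v \<Rightarrow> nat \<Rightarrow> bool" where
  "temporal_path_arrival E lab u v t \<longleftrightarrow>
     (\<exists>vs. length vs \<ge> 2 \<and> hd vs = u \<and> last vs = v \<and>
        (\<forall>k. k + 1 < length vs \<longrightarrow> {vs!k, vs!(k+1)} \<in> E) \<and>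
        (\<forall>k. k + 2 < length vs \<longrightarrow> lab {vs!k, vs!(k+1)} < lab {vs!(k+1), vs!(k+2)}) \<and>
        lab {vs!(length vs - 2), vs!(length vs - 1)} = t)"

definition reaches_by :: "'v set set \<Rightarrow> ('v set \<Rightarrow> nat) \<Rightarrow> 'v \<Rightarrow> 'v \<Rightarrow> nat \<Rightarrow> bool" where
  "reaches_by E lab u v t \<longleftrightarrow> u = v \<or> (\<exists>t'\<le>t. temporal_path_arrival E lab u v t')"

definition reachtime :: "'v set \<Rightarrow> 'v set set \<Rightarrow> ('v set \<Rightarrow> nat) \<Rightarrow> 'v \<Rightarrow> nat" where
  "reachtime V E lab u = (LEAST t. \<forall>v\<in>V. reaches_by E lab u v t)"

definition delayed :: "'v set set \<Rightarrow> ('v set \<Rightarrow> nat) \<Rightarrow> ('v set \<Rightarrow> nat) \<Rightarrow> bool" where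
  "delayed E lab0 lab \<longleftrightarrow> (\<forall>e\<in>E. lab0 e \<le> lab e)"

definition is_solution ::
  "'v set \<Rightarrow> 'v set set \<Rightarrow> ('v set \<Rightarrow> nat) \<Rightarrow> 'v set \<Rightarrow> ('v set \<Rightarrow> nat) \<Rightarrow> bool" where
  "is_solution V E lab0 S lab \<longleftrightarrow> delayed E lab0 lab \<and>
     (\<forall>s\<in>S. \<forall>v\<in>V. \<exists>t. reaches_by E lab s v t)"

definition solution_value :: "'v set \<Rightarrow> 'v set set \<Rightarrow> ('v set \<Rightarrow> nat) \<Rightarrow> 'v set \<Rightarrow> nat" where
  "solution_value V E lab S = Max ((\<lambda>s. reachtime V E lab s) ` S)"

datatype vtx = Src | Src' | A nat | A' nat | Z nat | Z' nat
  | B nat | B' nat | W nat | P nat | Q nat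

definition G_vertices :: "nat \<Rightarrow> nat \<Rightarrow> vtx set" where
  "G_vertices n m = {Src, Src'} \<union> (\<Union>j\<in>{..<m}. {A j, A' j, Z j, Z' j})
     \<union> (\<Union>i\<in>{..<n}. {B i, B' i, W i}) \<union> (\<Union>i\<in>{1..5}. {P i, Q i})"

definition G_edges :: "nat \<Rightarrow> nat \<Rightarrow> (nat \<Rightarrow> nat set) \<Rightarrow> vtx set set" where
  "G_edges n m c =
     (\<Union>j\<in>{..<m}. {{Src, A j}, {Src', A' j}, {A j, Z j}, {A' j, Z' j}})
   \<union> (\<Union>i\<in>{..<n}. {{B i, W i}, {W i, B' i}})
   \<union> {{A j, B i} | i j. j < m \<and> i < n \<and> i \<in> c j}
   \<union> {{A' j, B' i} | i j. j < m \<and> i < n \<and> i \<in> c j}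
   \<union> (\<Union>{ {{B i, B k}, {B' i, B' k}, {W i, W k}} | i k.
          i < n \<and> k < n \<and> i \<noteq> k \<and> (\<exists>j<m. i \<in> c j \<and> k \<in> c j)})
   \<union> {{Src, P 1}, {Src, Q 1}, {Src', P 5}, {Src', Q 5}}
   \<union> (\<Union>i\<in>{1..4}. {{P i, P (i+1)}, {Q i, Q (i+1)}})
   \<union> (\<Union>i\<in>{1..5}. {{P i, Q i}})"

definition G_labels :: "vtx set \<Rightarrow> nat" where
  "G_labels e = 1"

end

theory Submission
  imports Defs
begin


lemma tpa_edge:
  assumes "{u,v} \<in> E" shows "temporal_path_arrival E lab u v (lab {u,v})"
  unfolding temporal_path_arrival_def
  by (rule exI[of _ "[u,v]"]) (use assms in \<open>auto simp: less_Suc_eq\<close>)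

lemma tpa_step:
  assumes "temporal_path_arrival E lab u v t" "{v,w} \<in> E" "lab {v,w} = t'" "t < t'"
  shows "temporal_path_arrival E lab u w t'"
proof -
  obtain vs where L: "length vs \<ge> 2" and H: "hd vs = u" and La: "last vs = v"
    and Ed: "\<forall>k. k + 1 < length vs \<longrightarrow> {vs!k, vs!(k+1)} \<in> E"
    and In: "\<forall>k. k + 2 < length vs \<longrightarrow> lab {vs!k, vs!(k+1)} < lab {vs!(k+1), vs!(k+2)}"
    and T: "lab {vs!(length vs - 2), vs!(length vs - 1)} = t"
    using assms(1) unfolding temporal_path_arrival_def by blast
  define ws where "ws = vs @ [w]"
  have lv: "vs ! (length vs - 1) = v" using La L by (subst last_conv_nth[symmetric]) auto
  have lw: "length ws = length vs + 1" by (simp add: ws_def)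
  have n1: "\<And>k. k < length vs \<Longrightarrow> ws ! k = vs ! k" by (simp add: ws_def nth_append)
  have n2: "ws ! length vs = w" by (simp add: ws_def)
  show ?thesis unfolding temporal_path_arrival_def
  proof (rule exI[of _ ws], intro conjI allI impI)
    show "2 \<le> length ws" using L lw by simp
    show "hd ws = u" using L H by (cases vs) (auto simp: ws_def)
    show "last ws = w" by (simp add: ws_def)
    fix k assume k: "k + 1 < length ws"
    show "{ws ! k, ws ! (k + 1)} \<in> E"
    proof (cases "k + 1 < length vs")
      case True thus ?thesis using Ed n1 by simp
    next
      case False
      hence k1: "k + 1 = length vs" using k lw by simp
      hence "ws ! (k+1) = w" using n2 by simp
      moreover have "ws ! k = v" using n1 k1 lv by (metis add_diff_cancel_right' less_add_one)
      ultimately show ?thesis using assms(2) by simp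
    qed
  next
    fix k assume k: "k + 2 < length ws"
    show "lab {ws ! k, ws ! (k + 1)} < lab {ws ! (k + 1), ws ! (k + 2)}"
    proof (cases "k + 2 < length vs")
      case True thus ?thesis using In n1 by simp
    next
      case False
      hence kk: "k = length vs - 2" using k lw by simp
      have "ws ! k = vs ! (length vs - 2)" using n1 kk L by simp
      moreover have "k+1 = length vs - 1" using kk L by simp
      hence "ws ! (k+1) = vs ! (length vs - 1)" using n1 L by simp
      moreover have "k+2 = length vs" using kk L by simp
      hence "ws ! (k+2) = w" using n2 by simp
      ultimately show ?thesis using T lv assms by simp
    qed
  next
    have a: "length ws - 2 = length vs - 1" using lw by simp
    have b: "length ws - 1 = length vs" using lw by simp
    show "lab {ws ! (length ws - 2), ws ! (length ws - 1)} = t'"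
      unfolding a b using n1 n2 lv L assms(3) by simp
  qed
qed

lemma reaches_by_mono: "reaches_by E lab u v t \<Longrightarrow> t \<le> t' \<Longrightarrow> reaches_by E lab u v t'"
  unfolding reaches_by_def by (meson le_trans)

lemma ex_bound:
  assumes "finite V" "\<forall>v\<in>V. \<exists>t. reaches_by E lab u v t"
  shows "\<exists>T. \<forall>v\<in>V. reaches_by E lab u v T"
  using assms
proof (induction V rule: finite_induct)
  case empty then show ?case by simp
next
  case (insert x F)
  then obtain T where T: "\<forall>v\<in>F. reaches_by E lab u v T" by blast
  obtain t where t: "reaches_by E lab u x t" using insert by blast
  show ?case
    by (rule exI[of _ "max T t"]) (use T t reaches_by_mono in \<open>fastforce\<close>)
qed

lemma lb_path:
  fixes d :: "'v \<Rightarrow> nat"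
  assumes pos: "\<forall>e\<in>E. 1 \<le> lab e" and dd: "\<And>x y. {x,y}\<in>E \<Longrightarrow> d x \<le> d y + 1"
    and p: "temporal_path_arrival E lab u v t"
  shows "d v \<le> d u + t"
proof -
  obtain vs where L: "length vs \<ge> 2" and H: "hd vs = u" and La: "last vs = v"
    and Ed: "\<forall>k. k + 1 < length vs \<longrightarrow> {vs!k, vs!(k+1)} \<in> E"
    and In: "\<forall>k. k + 2 < length vs \<longrightarrow> lab {vs!k, vs!(k+1)} < lab {vs!(k+1), vs!(k+2)}"
    and T: "lab {vs!(length vs - 2), vs!(length vs - 1)} = t"
    using p unfolding temporal_path_arrival_def by blast
  have key: "k + 1 < length vs \<Longrightarrow> d (vs!(k+1)) \<le> d (vs!0) + lab {vs!k, vs!(k+1)}" for k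
  proof (induction k)
    case 0
    have e: "{vs!0, vs!1} \<in> E" using Ed 0 by (metis add_0)
    hence "{vs!1, vs!0} \<in> E" by (simp add: insert_commute)
    hence "d (vs!1) \<le> d (vs!0) + 1" using dd by blast
    moreover have "1 \<le> lab {vs!0, vs!1}" using pos e by blast
    ultimately show ?case by simp
  next
    case (Suc k)
    have IH: "d (vs!(k+1)) \<le> d (vs!0) + lab {vs!k, vs!(k+1)}" using Suc by simp
    have e: "{vs!(k+1), vs!(k+2)} \<in> E" using Ed Suc.prems by (metis Suc_eq_plus1 add_2_eq_Suc')
    hence "{vs!(k+2), vs!(k+1)} \<in> E" by (simp add: insert_commute)
    hence "d (vs!(k+2)) \<le> d (vs!(k+1)) + 1" using dd by blast
    moreover have "lab {vs!k, vs!(k+1)} < lab {vs!(k+1), vs!(k+2)}" using In Suc.prems by simp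
    ultimately show ?case using IH by (simp add: numeral_2_eq_2)
  qed
  have "d (vs!(length vs - 1)) \<le> d (vs!0) + t"
    using key[of "length vs - 2"] L T
    by (simp add: numeral_2_eq_2 Suc_diff_Suc)
  moreover have "vs!0 = u" using H L by (cases vs) auto
  moreover have "vs!(length vs - 1) = v" using La L by (subst last_conv_nth[symmetric]) auto
  ultimately show ?thesis by simp
qed



lemma tpa_edge':
  "{u,v} \<in> E \<Longrightarrow> lab {u,v} = t \<Longrightarrow> temporal_path_arrival E lab u v t"
  using tpa_edge by metis

lemma tpa_step2:
  assumes "temporal_path_arrival E lab u v t" "{w,v} \<in> E" "lab {w,v} = t'" "t < t'"
  shows "temporal_path_arrival E lab u w t'"
  using tpa_step[OF assms(1) _ _ assms(4)] assms(2,3) by (simp add: insert_commute)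

fun dpot :: "vtx \<Rightarrow> nat" where
  "dpot Src = 0" | "dpot Src' = 6" | "dpot (A _) = 1" | "dpot (A' _) = 5"
| "dpot (Z _) = 2" | "dpot (Z' _) = 6" | "dpot (B _) = 2" | "dpot (B' _) = 4"
| "dpot (W _) = 3" | "dpot (P i) = i" | "dpot (Q i) = i"

definition okd :: "vtx set \<Rightarrow> bool" where
  "okd e \<longleftrightarrow> (\<forall>x y. e = {x,y} \<longrightarrow> dpot x \<le> dpot y + 1)"

lemma okd_dbl: "okd {a,b} \<longleftrightarrow> dpot a \<le> dpot b + 1 \<and> dpot b \<le> dpot a + 1"
  unfolding okd_def doubleton_eq_iff by (metis le_add1 order_refl)

lemma okd_all: "\<forall>e\<in>G_edges n m c. okd e"
  unfolding G_edges_def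
  apply (intro ballI)
  apply (elim UnE)
  apply (auto simp: okd_dbl)
  done

lemma dpot_edge: "{x,y} \<in> G_edges n m c \<Longrightarrow> dpot x \<le> dpot y + 1"
  using okd_all unfolding okd_def by blast

lemma finite_V: "finite (G_vertices n m)"
  unfolding G_vertices_def by simp

lemma lower_rt:
  assumes "is_solution (G_vertices n m) (G_edges n m c) G_labels {Src, Src'} lab"
  shows "6 \<le> reachtime (G_vertices n m) (G_edges n m c) lab Src"
proof -
  let ?V = "G_vertices n m" and ?E = "G_edges n m c"
  have pos: "\<forall>e\<in>?E. 1 \<le> lab e" using assms
    unfolding is_solution_def delayed_def G_labels_def by blast
  have "\<exists>T. \<forall>v\<in>?V. reaches_by ?E lab Src v T"
    by (rule ex_bound[OF finite_V]) (use assms in \<open>auto simp: is_solution_def\<close>)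
  hence "\<forall>v\<in>?V. reaches_by ?E lab Src v (reachtime ?V ?E lab Src)"
    unfolding reachtime_def by (rule LeastI_ex)
  moreover have "Src' \<in> ?V" unfolding G_vertices_def by simp
  ultimately have "reaches_by ?E lab Src Src' (reachtime ?V ?E lab Src)" by blast
  then obtain t' where t': "t' \<le> reachtime ?V ?E lab Src" "temporal_path_arrival ?E lab Src Src' t'"
    unfolding reaches_by_def by auto
  have "dpot Src' \<le> dpot Src + t'"
    by (rule lb_path[OF pos _ t'(2)]) (rule dpot_edge)
  thus ?thesis using t' by simp
qed

definition lab :: "(nat \<Rightarrow> bool) \<Rightarrow> vtx set \<Rightarrow> nat" where
"lab \<tau> e =
 (if (\<exists>j. e = {A j, Z j} \<or> e = {A' j, Z' j}) then 6
  else if (\<exists>i. \<tau> i \<and> e = {B i, W i}) \<or> (\<exists>i. \<not>\<tau> i \<and> e = {W i, B' i}) then 3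
  else if (\<exists>i. \<not>\<tau> i \<and> e = {B i, W i}) \<or> (\<exists>i. \<tau> i \<and> e = {W i, B' i}) then 4
  else if (\<exists>i j. \<tau> i \<and> e = {A j, B i}) \<or> (\<exists>i j. \<not> \<tau> i \<and> e = {A' j, B' i}) then 2
  else if (\<exists>i j. \<not>\<tau> i \<and> e = {A j, B i}) \<or> (\<exists>i j. \<tau> i \<and> e = {A' j, B' i}) then 5
  else if (\<exists>i k. e = {B i, B k} \<or> e = {B' i, B' k}) then 5
  else if (\<exists>i k. e = {W i, W k}) then 4
  else if e = {P 1, P 2} \<or> e = {Q 5, Q 4} then 2
  else if e = {P 2, P 3} \<or> e = {Q 4, Q 3} then 3
  else if e = {P 3, P 4} \<or> e = {Q 3, Q 2} \<or> e = {P 3, Q 3} then 4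
  else if e = {P 4, P 5} \<or> e = {Q 2, Q 1} \<or> e = {P 2, Q 2} \<or> e = {P 4, Q 4} then 5
  else if e = {P 5, Src'} \<or> e = {Q 1, Src} \<or> e = {P 1, Q 1} \<or> e = {P 5, Q 5} then 6
  else 1)"

lemma lab_pos: "1 \<le> lab \<tau> e" unfolding lab_def by simp

lemma lab_SA: "lab \<tau> {Src, A j} = 1" "lab \<tau> {Src', A' j} = 1"
  "lab \<tau> {Src, P 1} = 1" "lab \<tau> {Src', Q 5} = 1"
  unfolding lab_def by (simp_all add: doubleton_eq_iff)
lemma lab_AZ: "lab \<tau> {A j, Z j} = 6" "lab \<tau> {A' j, Z' j} = 6"
  unfolding lab_def by (simp_all add: doubleton_eq_iff)
lemma lab_BW: "lab \<tau> {B i, W i} = (if \<tau> i then 3 else 4)"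
  "lab \<tau> {W i, B' i} = (if \<tau> i then 4 else 3)"
  unfolding lab_def by (simp_all add: doubleton_eq_iff)
lemma lab_AB: "lab \<tau> {A j, B i} = (if \<tau> i then 2 else 5)"
  "lab \<tau> {A' j, B' i} = (if \<tau> i then 5 else 2)"
  unfolding lab_def by (simp_all add: doubleton_eq_iff)
lemma lab_BB: "lab \<tau> {B i, B k} = 5" "lab \<tau> {B' i, B' k} = 5" "lab \<tau> {W i, W k} = 4"
  unfolding lab_def by (simp add: doubleton_eq_iff; blast)+
lemma lab_lad: "lab \<tau> {P 1, P 2} = 2" "lab \<tau> {P 2, P 3} = 3" "lab \<tau> {P 3, P 4} = 4"
  "lab \<tau> {P 4, P 5} = 5" "lab \<tau> {P 5, Src'} = 6"
  "lab \<tau> {Q 5, Q 4} = 2" "lab \<tau> {Q 4, Q 3} = 3" "lab \<tau> {Q 3, Q 2} = 4"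
  "lab \<tau> {Q 2, Q 1} = 5" "lab \<tau> {Q 1, Src} = 6"
  "lab \<tau> {P 1, Q 1} = 6" "lab \<tau> {P 2, Q 2} = 5" "lab \<tau> {P 3, Q 3} = 4"
  "lab \<tau> {P 4, Q 4} = 5" "lab \<tau> {P 5, Q 5} = 6"
  unfolding lab_def by (simp_all add: doubleton_eq_iff)

lemmas labs = lab_SA lab_AZ lab_BW lab_AB lab_BB lab_lad

lemma eS: "j<m \<Longrightarrow> {Src, A j} \<in> G_edges n m c" "j<m \<Longrightarrow> {Src', A' j} \<in> G_edges n m c"
  "j<m \<Longrightarrow> {A j, Z j} \<in> G_edges n m c" "j<m \<Longrightarrow> {A' j, Z' j} \<in> G_edges n m c"
  unfolding G_edges_def by (rule UnI1, rule UnI1, rule UnI1, rule UnI1, rule UnI1, rule UnI1, rule UnI1,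
      rule UN_I[of j], simp, simp)+
lemma eBW: "i<n \<Longrightarrow> {B i, W i} \<in> G_edges n m c" "i<n \<Longrightarrow> {W i, B' i} \<in> G_edges n m c"
  unfolding G_edges_def by (rule UnI1, rule UnI1, rule UnI1, rule UnI1, rule UnI1, rule UnI1, rule UnI2,
      rule UN_I[of i], simp, simp)+
lemma eAB: "j<m \<Longrightarrow> i<n \<Longrightarrow> i \<in> c j \<Longrightarrow> {A j, B i} \<in> G_edges n m c"
  "j<m \<Longrightarrow> i<n \<Longrightarrow> i \<in> c j \<Longrightarrow> {A' j, B' i} \<in> G_edges n m c"
  unfolding G_edges_def
   apply (rule UnI1, rule UnI1, rule UnI1, rule UnI1, rule UnI1, rule UnI2)
   apply (rule CollectI, rule exI[of _ i], rule exI[of _ j], simp)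
  apply (rule UnI1, rule UnI1, rule UnI1, rule UnI1, rule UnI2)
  apply (rule CollectI, rule exI[of _ i], rule exI[of _ j], simp)
  done
lemma eBB:
  assumes "j<m" "i<n" "k<n" "i \<in> c j" "k \<in> c j" "i \<noteq> k"
  shows "{B i, B k} \<in> G_edges n m c" "{B' i, B' k} \<in> G_edges n m c" "{W i, W k} \<in> G_edges n m c"
proof -
  let ?X = "{ {{B i, B k}, {B' i, B' k}, {W i, W k}} | i k.
          i < n \<and> k < n \<and> i \<noteq> k \<and> (\<exists>j<m. i \<in> c j \<and> k \<in> c j)}"
  have mem: "{{B i, B k}, {B' i, B' k}, {W i, W k}} \<in> ?X"
    apply (rule CollectI)
    apply (rule exI[of _ i], rule exI[of _ k])
    using assms by auto
  have g: "e \<in> \<Union>?X \<Longrightarrow> e \<in> G_edges n m c" for e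
    unfolding G_edges_def
    apply (rule UnI1, rule UnI1, rule UnI1)
    apply (rule UnI2)
    by assumption
  show "{B i, B k} \<in> G_edges n m c" by (rule g, rule UnionI[OF mem]) simp
  show "{B' i, B' k} \<in> G_edges n m c" by (rule g, rule UnionI[OF mem]) simp
  show "{W i, W k} \<in> G_edges n m c" by (rule g, rule UnionI[OF mem]) simp
qed

lemma e6: "x \<in> {{Src, P 1}, {Src, Q 1}, {Src', P 5}, {Src', Q 5}} \<Longrightarrow> x \<in> G_edges n m c"
  unfolding G_edges_def by (rule UnI1, rule UnI1, rule UnI2)
lemma e7: "i \<in> {1..4} \<Longrightarrow> x \<in> {{P i, P (i+1)}, {Q i, Q (i+1)}} \<Longrightarrow> x \<in> G_edges n m c"
  unfolding G_edges_def by (rule UnI1, rule UnI2, rule UN_I)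
lemma e8: "i \<in> {1..5} \<Longrightarrow> x \<in> {{P i, Q i}} \<Longrightarrow> x \<in> G_edges n m c"
  unfolding G_edges_def by (rule UnI2, rule UN_I)

lemma elad: "{Src, P 1} \<in> G_edges n m c" "{Src', Q 5} \<in> G_edges n m c"
  "{P 1, P 2} \<in> G_edges n m c" "{P 2, P 3} \<in> G_edges n m c" "{P 3, P 4} \<in> G_edges n m c"
  "{P 4, P 5} \<in> G_edges n m c" "{P 5, Src'} \<in> G_edges n m c"
  "{Q 5, Q 4} \<in> G_edges n m c" "{Q 4, Q 3} \<in> G_edges n m c" "{Q 3, Q 2} \<in> G_edges n m c"
  "{Q 2, Q 1} \<in> G_edges n m c" "{Q 1, Src} \<in> G_edges n m c"
  "{P 1, Q 1} \<in> G_edges n m c" "{P 2, Q 2} \<in> G_edges n m c" "{P 3, Q 3} \<in> G_edges n m c"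
  "{P 4, Q 4} \<in> G_edges n m c" "{P 5, Q 5} \<in> G_edges n m c"
  apply (rule e6; simp)
  apply (rule e6; simp)
  apply (rule e7[of 1]; simp add: eval_nat_numeral)
  apply (rule e7[of 2]; simp add: eval_nat_numeral)
  apply (rule e7[of 3]; simp add: eval_nat_numeral)
  apply (rule e7[of 4]; simp add: eval_nat_numeral)
  apply (rule e6; simp add: insert_commute)
  apply (rule e7[of 4]; simp add: eval_nat_numeral insert_commute)
  apply (rule e7[of 3]; simp add: eval_nat_numeral insert_commute)
  apply (rule e7[of 2]; simp add: eval_nat_numeral insert_commute)
  apply (rule e7[of 1]; simp add: eval_nat_numeral insert_commute)
  apply (rule e6; simp add: insert_commute)
  apply (rule e8[of 1]; simp)
  apply (rule e8[of 2]; simp)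
  apply (rule e8[of 3]; simp)
  apply (rule e8[of 4]; simp)
  apply (rule e8[of 5]; simp)
  done
lemma reach6: "temporal_path_arrival E l u v t \<Longrightarrow> t \<le> 6 \<Longrightarrow> reaches_by E l u v 6"
  unfolding reaches_by_def by blast

lemma five_cases: "(i::nat) \<in> {1..5} \<Longrightarrow> i = 1 \<or> i = 2 \<or> i = 3 \<or> i = 4 \<or> i = 5"
  by auto

context
  fixes n m :: nat and c :: "nat \<Rightarrow> nat set" and \<tau> :: "nat \<Rightarrow> bool"
  assumes M: "MonLinNAE3SAT n m c"
    and T: "\<forall>j<m. (\<exists>i\<in>c j. \<tau> i) \<and> (\<exists>i\<in>c j. \<not> \<tau> i)"
begin

abbreviation arr where "arr u v t \<equiv> temporal_path_arrival (G_edges n m c) (lab \<tau>) u v t"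

lemma cj: "j<m \<Longrightarrow> i \<in> c j \<Longrightarrow> i < n"
  using M unfolding MonLinNAE3SAT_def by blast

lemma occ: assumes "i<n" obtains j where "j<m" "i \<in> c j"
proof -
  have "card {j. j < m \<and> i \<in> c j} = 4" using M assms unfolding MonLinNAE3SAT_def by blast
  hence "{j. j < m \<and> i \<in> c j} \<noteq> {}" by (metis card.empty zero_neq_numeral)
  thus ?thesis using that by blast
qed

lemma tr: assumes "j<m" obtains k where "k \<in> c j" "k < n" "\<tau> k"
  using T assms cj by blast
lemma fa: assumes "j<m" obtains k where "k \<in> c j" "k < n" "\<not> \<tau> k"
  using T assms cj by blast

lemma sedge: "{u,v} \<in> G_edges n m c \<Longrightarrow> lab \<tau> {u,v} = t \<Longrightarrow> arr u v t"
  by (rule tpa_edge')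
lemma sstep: "arr u v t \<Longrightarrow> {v,w} \<in> G_edges n m c \<Longrightarrow> lab \<tau> {v,w} = t' \<Longrightarrow> t < t' \<Longrightarrow> arr u w t'"
  by (rule tpa_step)
lemma sstep2: "arr u v t \<Longrightarrow> {w,v} \<in> G_edges n m c \<Longrightarrow> lab \<tau> {w,v} = t' \<Longrightarrow> t < t' \<Longrightarrow> arr u w t'"
  by (rule tpa_step2)

lemma sA: "j<m \<Longrightarrow> arr Src (A j) 1"
  by (rule tpa_edge') (simp_all add: eS labs)

lemma sBt: assumes "i<n" "\<tau> i" shows "arr Src (B i) 2"
proof -
  obtain j where j: "j<m" "i \<in> c j" using occ assms by blast
  show ?thesis by (rule tpa_step[OF sA[OF j(1)]]) (use j assms in \<open>simp_all add: eAB labs\<close>)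
qed
lemma sWt: assumes "i<n" "\<tau> i" shows "arr Src (W i) 3"
  by (rule tpa_step[OF sBt[OF assms]]) (use assms in \<open>simp_all add: eBW labs\<close>)
lemma sB't: assumes "i<n" "\<tau> i" shows "arr Src (B' i) 4"
  by (rule tpa_step[OF sWt[OF assms]]) (use assms in \<open>simp_all add: eBW labs\<close>)
lemma sBf: assumes "i<n" "\<not>\<tau> i" shows "arr Src (B i) 5"
proof -
  obtain j where j: "j<m" "i \<in> c j" using occ assms by blast
  show ?thesis by (rule tpa_step[OF sA[OF j(1)]]) (use j assms in \<open>simp_all add: eAB labs\<close>)
qed
lemma sWf: assumes "i<n" "\<not>\<tau> i" shows "arr Src (W i) 4"
proof -
  obtain j where j: "j<m" "i \<in> c j" using occ assms by blast
  obtain k where k: "k \<in> c j" "k<n" "\<tau> k" using tr j by blast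
  have "k \<noteq> i" using k assms by blast
  have e: "{W k, W i} \<in> G_edges n m c" using eBB(3)[where j=j and m=m and i=k and n=n and k=i and c=c, OF j(1) k(2) assms(1) k(1) j(2) \<open>k \<noteq> i\<close>] .
  show ?thesis by (rule tpa_step[OF sWt[OF k(2,3)] e]) (simp_all add: labs)
qed
lemma sB'f: assumes "i<n" "\<not>\<tau> i" shows "arr Src (B' i) 5"
proof -
  obtain j where j: "j<m" "i \<in> c j" using occ assms by blast
  obtain k where k: "k \<in> c j" "k<n" "\<tau> k" using tr j by blast
  have "k \<noteq> i" using k assms by blast
  have e: "{B' k, B' i} \<in> G_edges n m c" using eBB(2)[where j=j and m=m and i=k and n=n and k=i and c=c, OF j(1) k(2) assms(1) k(1) j(2) \<open>k \<noteq> i\<close>] .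
  show ?thesis by (rule tpa_step[OF sB't[OF k(2,3)] e]) (simp_all add: labs)
qed
lemma sA': assumes "j<m" shows "arr Src (A' j) 5"
proof -
  obtain k where k: "k \<in> c j" "k<n" "\<tau> k" using tr assms by blast
  show ?thesis by (rule tpa_step2[OF sB't[OF k(2,3)]])
    (use k assms in \<open>simp_all add: eAB labs\<close>)
qed
lemma sZ: "j<m \<Longrightarrow> arr Src (Z j) 6"
  by (rule tpa_step[OF sA[of j] eS(3)]) (simp_all add: labs)
lemma sZ': "j<m \<Longrightarrow> arr Src (Z' j) 6"
  by (rule tpa_step[OF sA'[of j] eS(4)]) (simp_all add: labs)
lemma sP: "arr Src (P 1) 1" "arr Src (P 2) 2" "arr Src (P 3) 3" "arr Src (P 4) 4"
  "arr Src (P 5) 5" "arr Src Src' 6"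
proof -
  show 1: "arr Src (P 1) 1" by (rule sedge[OF elad(1) lab_SA(3)])
  show 2: "arr Src (P 2) 2" by (rule sstep[OF 1 elad(3) lab_lad(1)]) simp
  show 3: "arr Src (P 3) 3" by (rule sstep[OF 2 elad(4) lab_lad(2)]) simp
  show 4: "arr Src (P 4) 4" by (rule sstep[OF 3 elad(5) lab_lad(3)]) simp
  show 5: "arr Src (P 5) 5" by (rule sstep[OF 4 elad(6) lab_lad(4)]) simp
  show "arr Src Src' 6" by (rule sstep[OF 5 elad(7) lab_lad(5)]) simp
qed
lemma sQ: "arr Src (Q 1) 6" "arr Src (Q 2) 5" "arr Src (Q 3) 4" "arr Src (Q 4) 5"
  "arr Src (Q 5) 6"
  apply (rule sstep[OF sP(1) elad(13) lab_lad(11)], simp)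
  apply (rule sstep[OF sP(2) elad(14) lab_lad(12)], simp)
  apply (rule sstep[OF sP(3) elad(15) lab_lad(13)], simp)
  apply (rule sstep[OF sP(4) elad(16) lab_lad(14)], simp)
  apply (rule sstep[OF sP(5) elad(17) lab_lad(15)], simp)
  done

lemma reach_Src: assumes "v \<in> G_vertices n m" shows "reaches_by (G_edges n m c) (lab \<tau>) Src v 6"
proof -
  have h: "\<And>t. arr Src v t \<Longrightarrow> t \<le> 6 \<Longrightarrow> ?thesis" by (rule reach6)
  have "v = Src \<or> v = Src' \<or> (\<exists>j<m. v = A j \<or> v = A' j \<or> v = Z j \<or> v = Z' j)
     \<or> (\<exists>i<n. v = B i \<or> v = B' i \<or> v = W i) \<or> (\<exists>i\<in>{1..5}. v = P i \<or> v = Q i)"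
    using assms unfolding G_vertices_def by blast
  moreover
  { assume "v = Src" hence ?thesis unfolding reaches_by_def by simp }
  moreover
  { assume "v = Src'" hence ?thesis using h sP by blast }
  moreover
  { fix j assume "j<m" "v = A j \<or> v = A' j \<or> v = Z j \<or> v = Z' j"
    hence ?thesis using h sA sA' sZ sZ' by fastforce }
  moreover
  { fix i assume i: "i<n" "v = B i \<or> v = B' i \<or> v = W i"
    have ?thesis
    proof (cases "\<tau> i")
      case True thus ?thesis using i h sBt sB't sWt by fastforce
    next
      case False thus ?thesis using i h sBf sB'f sWf by fastforce
    qed }
  moreover
  { fix i assume "i\<in>{1..5}" "v = P i \<or> v = Q i"
    hence ?thesis using five_cases h sP sQ by fastforce }
  ultimately show ?thesis by blast
qed


lemma tA': "j<m \<Longrightarrow> arr Src' (A' j) 1"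
  by (rule sedge[OF eS(2) lab_SA(2)])

lemma tB'f: assumes "i<n" "\<not>\<tau> i" shows "arr Src' (B' i) 2"
proof -
  obtain j where j: "j<m" "i \<in> c j" using occ assms by blast
  show ?thesis by (rule sstep[OF tA'[OF j(1)] eAB(2)[where c=c, OF j(1) assms(1) j(2)]]) (use assms in \<open>simp_all add: labs\<close>)
qed
lemma tWf: assumes "i<n" "\<not>\<tau> i" shows "arr Src' (W i) 3"
  by (rule sstep2[OF tB'f[OF assms] eBW(2)[OF assms(1)]]) (use assms in \<open>simp_all add: labs\<close>)
lemma tBf: assumes "i<n" "\<not>\<tau> i" shows "arr Src' (B i) 4"
  by (rule sstep2[OF tWf[OF assms] eBW(1)[OF assms(1)]]) (use assms in \<open>simp_all add: labs\<close>)
lemma tB't: assumes "i<n" "\<tau> i" shows "arr Src' (B' i) 5"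
proof -
  obtain j where j: "j<m" "i \<in> c j" using occ assms by blast
  show ?thesis by (rule sstep[OF tA'[OF j(1)] eAB(2)[where c=c, OF j(1) assms(1) j(2)]]) (use assms in \<open>simp_all add: labs\<close>)
qed
lemma tWt: assumes "i<n" "\<tau> i" shows "arr Src' (W i) 4"
proof -
  obtain j where j: "j<m" "i \<in> c j" using occ assms by blast
  obtain k where k: "k \<in> c j" "k<n" "\<not>\<tau> k" using fa j by blast
  have "k \<noteq> i" using k assms by blast
  have e: "{W k, W i} \<in> G_edges n m c" using eBB(3)[where j=j and m=m and i=k and n=n and k=i and c=c, OF j(1) k(2) assms(1) k(1) j(2) \<open>k \<noteq> i\<close>] .
  show ?thesis by (rule sstep[OF tWf[OF k(2,3)] e]) (simp_all add: labs)
qed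
lemma tBt: assumes "i<n" "\<tau> i" shows "arr Src' (B i) 5"
proof -
  obtain j where j: "j<m" "i \<in> c j" using occ assms by blast
  obtain k where k: "k \<in> c j" "k<n" "\<not>\<tau> k" using fa j by blast
  have "k \<noteq> i" using k assms by blast
  have e: "{B k, B i} \<in> G_edges n m c" using eBB(1)[where j=j and m=m and i=k and n=n and k=i and c=c, OF j(1) k(2) assms(1) k(1) j(2) \<open>k \<noteq> i\<close>] .
  show ?thesis by (rule sstep[OF tBf[OF k(2,3)] e]) (simp_all add: labs)
qed
lemma tA: assumes "j<m" shows "arr Src' (A j) 5"
proof -
  obtain k where k: "k \<in> c j" "k<n" "\<not>\<tau> k" using fa assms by blast
  show ?thesis by (rule sstep2[OF tBf[OF k(2,3)] eAB(1)[where c=c, OF assms k(2,1)]])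
    (use k in \<open>simp_all add: labs\<close>)
qed
lemma tZ: "j<m \<Longrightarrow> arr Src' (Z j) 6"
  by (rule sstep[OF tA[of j] eS(3)]) (simp_all add: labs)
lemma tZ': "j<m \<Longrightarrow> arr Src' (Z' j) 6"
  by (rule sstep[OF tA'[of j] eS(4)]) (simp_all add: labs)
lemma tQ: "arr Src' (Q 5) 1" "arr Src' (Q 4) 2" "arr Src' (Q 3) 3" "arr Src' (Q 2) 4"
  "arr Src' (Q 1) 5" "arr Src' Src 6"
proof -
  show 1: "arr Src' (Q 5) 1" by (rule sedge[OF elad(2) lab_SA(4)])
  show 2: "arr Src' (Q 4) 2" by (rule sstep[OF 1 elad(8) lab_lad(6)]) simp
  show 3: "arr Src' (Q 3) 3" by (rule sstep[OF 2 elad(9) lab_lad(7)]) simp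
  show 4: "arr Src' (Q 2) 4" by (rule sstep[OF 3 elad(10) lab_lad(8)]) simp
  show 5: "arr Src' (Q 1) 5" by (rule sstep[OF 4 elad(11) lab_lad(9)]) simp
  show "arr Src' Src 6" by (rule sstep[OF 5 elad(12) lab_lad(10)]) simp
qed
lemma tP: "arr Src' (P 5) 6" "arr Src' (P 4) 5" "arr Src' (P 3) 4" "arr Src' (P 2) 5"
  "arr Src' (P 1) 6"
  apply (rule sstep2[OF tQ(1) elad(17) lab_lad(15)], simp)
  apply (rule sstep2[OF tQ(2) elad(16) lab_lad(14)], simp)
  apply (rule sstep2[OF tQ(3) elad(15) lab_lad(13)], simp)
  apply (rule sstep2[OF tQ(4) elad(14) lab_lad(12)], simp)
  apply (rule sstep2[OF tQ(5) elad(13) lab_lad(11)], simp)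
  done

lemma reach_Src': assumes "v \<in> G_vertices n m" shows "reaches_by (G_edges n m c) (lab \<tau>) Src' v 6"
proof -
  have h: "\<And>t. arr Src' v t \<Longrightarrow> t \<le> 6 \<Longrightarrow> ?thesis" by (rule reach6)
  have "v = Src \<or> v = Src' \<or> (\<exists>j<m. v = A j \<or> v = A' j \<or> v = Z j \<or> v = Z' j)
     \<or> (\<exists>i<n. v = B i \<or> v = B' i \<or> v = W i) \<or> (\<exists>i\<in>{1..5}. v = P i \<or> v = Q i)"
    using assms unfolding G_vertices_def by blast
  moreover
  { assume "v = Src'" hence ?thesis unfolding reaches_by_def by simp }
  moreover
  { assume "v = Src" hence ?thesis using h tQ by blast }
  moreover
  { fix j assume "j<m" "v = A j \<or> v = A' j \<or> v = Z j \<or> v = Z' j"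
    hence ?thesis using h tA tA' tZ tZ' by fastforce }
  moreover
  { fix i assume i: "i<n" "v = B i \<or> v = B' i \<or> v = W i"
    have ?thesis
    proof (cases "\<tau> i")
      case True thus ?thesis using i h tBt tB't tWt by fastforce
    next
      case False thus ?thesis using i h tBf tB'f tWf by fastforce
    qed }
  moreover
  { fix i assume "i\<in>{1..5}" "v = P i \<or> v = Q i"
    hence ?thesis using five_cases h tP tQ by fastforce }
  ultimately show ?thesis by blast
qed

end

theorem lemma1:
  fixes n m :: nat and c :: "nat \<Rightarrow> nat set"
  assumes "MonLinNAE3SAT n m c"
    and "NAE_satisfiable m c"
  shows "(\<exists>lab. is_solution (G_vertices n m) (G_edges n m c) G_labels {Src, Src'} lab \<and>
              solution_value (G_vertices n m) (G_edges n m c) lab {Src, Src'} = 6) \<and>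
         (\<forall>lab. is_solution (G_vertices n m) (G_edges n m c) G_labels {Src, Src'} lab \<longrightarrow>
              6 \<le> solution_value (G_vertices n m) (G_edges n m c) lab {Src, Src'})"
proof
  let ?V = "G_vertices n m" and ?E = "G_edges n m c"
  have lowv: "6 \<le> solution_value ?V ?E l {Src, Src'}"
    if sol: "is_solution ?V ?E G_labels {Src, Src'} l" for l
  proof -
    have "6 \<le> reachtime ?V ?E l Src" by (rule lower_rt[OF sol])
    also have "\<dots> \<le> Max ((\<lambda>s. reachtime ?V ?E l s) ` {Src, Src'})" by simp
    finally show ?thesis unfolding solution_value_def .
  qed
  thus "\<forall>lab. is_solution ?V ?E G_labels {Src, Src'} lab \<longrightarrow> 6 \<le> solution_value ?V ?E lab {Src, Src'}"
    by blast
  obtain \<tau> where T: "\<forall>j<m. (\<exists>i\<in>c j. \<tau> i) \<and> (\<exists>i\<in>c j. \<not> \<tau> i)"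
    using assms(2) unfolding NAE_satisfiable_def by blast
  have r1: "\<forall>v\<in>?V. reaches_by ?E (lab \<tau>) Src v 6" using reach_Src[OF assms(1) T] by blast
  have r2: "\<forall>v\<in>?V. reaches_by ?E (lab \<tau>) Src' v 6" using reach_Src'[OF assms(1) T] by blast
  have sol: "is_solution ?V ?E G_labels {Src, Src'} (lab \<tau>)"
    unfolding is_solution_def delayed_def G_labels_def using r1 r2 lab_pos by blast
  have u1: "reachtime ?V ?E (lab \<tau>) Src \<le> 6" unfolding reachtime_def
    by (rule Least_le) (rule r1)
  have u2: "reachtime ?V ?E (lab \<tau>) Src' \<le> 6" unfolding reachtime_def
    by (rule Least_le) (rule r2)
  have "solution_value ?V ?E (lab \<tau>) {Src, Src'} \<le> 6"
    unfolding solution_value_def using u1 u2 by simp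
  with lowv[OF sol] have "solution_value ?V ?E (lab \<tau>) {Src, Src'} = 6" by simp
  with sol show "\<exists>lab. is_solution ?V ?E G_labels {Src, Src'} lab \<and> solution_value ?V ?E lab {Src, Src'} = 6"
    by blast
qed

end
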